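(* Let $n\ge2$, fix a lattice $\mathbb{Z}+\mathbb{Z}\tau$ ($\operatorname{Im}\tau>0$) with Weierstrass function $\wp$, and fix $\lambda_1,\dots,\lambda_n\in\mathbb{C}$ with $\lambda_i-\lambda_j\notin\mathbb{Z}+\mathbb{Z}\tau$ for $i\ne j$. Let $k\ge2$ and let $i_1,\dots,i_k,m\in\{1,\dots,n\}$ be pairwise distinct. Then in the algebra $\mathcal{A}$ described in the context, \[ (-1)^{k+1}\sum_{a=1}^k [i_a\,m][i_{a+1}\,m]\cdots[i_k\,m]\cdot[i_1\,m][i_2\,m]\cdots[i_{a-1}\,m][i_a\,m] = \sum_{a=1}^k\wp(\lambda_{i_a}-\lambda_m)\,[i_a\,i_{a+1}][i_a\,i_{a+2}]\cdots[i_a\,i_k]\cdot[i_a\,i_1][i_a\,i_2]\cdots[i_a\,i_{a-1}]. \]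
   Context: Write $x_1,\dots,x_n$ for the coordinates on $\mathbb{C}^n$, $x_{ij}=x_i-x_j$, $\lambda_{ij}=\lambda_i-\lambda_j$, and let $\mathcal{M}$ be the field of meromorphic functions on $\mathbb{C}^n$; for $i\ne j$ let $s_{ij}$ act on $\mathcal{M}$ by $(s_{ij}f)(x)=f(x')$ where $x'$ is $x$ with coordinates $x_i,x_j$ interchanged. The algebra $\mathcal{A}$ is the $\mathbb{C}$-algebra generated by $\mathcal{M}$ and symbols $[ij]$, $1\le i\ne j\le n$, with $[ji]=-[ij]$, subject to: (i) $[ij]^2=\wp(\lambda_{ij})-\wp(x_{ij})$; (ii) $[ij][kl]=[kl][ij]$ if $\{i,j\}\cap\{k,l\}=\emptyset$; (iii) $[ij][jk]+[jk][ki]+[ki][ij]=0$ for distinct $i,j,k$; (iv) $[ij]f=(s_{ij}f)[ij]$ for $f\in\mathcal{M}$. *)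

theory Defs
  imports "HOL-Analysis.Analysis"
begin

definition lattice :: "complex \<Rightarrow> complex set" where
  "lattice \<tau> = {of_int a + of_int b * \<tau> | a b. True}"

text \<open>Weierstrass wp function of the lattice Z + Z tau (values at lattice points are junk).\<close>
definition wp :: "complex \<Rightarrow> complex \<Rightarrow> complex" where
  "wp \<tau> z = 1 / z ^ 2 + infsum (\<lambda>\<omega>. 1 / (z - \<omega>) ^ 2 - 1 / \<omega> ^ 2) (lattice \<tau> - {0})"

definition holo_on :: "(complex^'n::finite \<Rightarrow> complex) \<Rightarrow> (complex^'n) set \<Rightarrow> bool" where
  "holo_on f U \<longleftrightarrow> open U \<and> (\<forall>z\<in>U. \<exists>D. (f has_derivative D) (at z) \<and>
       (\<forall>(c::complex) v. D (c *s v) = c * D v))"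

text \<open>Meromorphic functions on C^n: locally a quotient g/h of holomorphic functions, h not
  identically zero on a connected neighbourhood (values on the zero set of h are irrelevant).\<close>
definition meromorphic :: "(complex^'n::finite \<Rightarrow> complex) \<Rightarrow> bool" where
  "meromorphic f \<longleftrightarrow> (\<forall>p. \<exists>U g h. p \<in> U \<and> connected U \<and> holo_on g U \<and> holo_on h U \<and>
       (\<exists>z\<in>U. h z \<noteq> 0) \<and> (\<forall>z\<in>U. h z \<noteq> 0 \<longrightarrow> f z = g z / h z))"

text \<open>Two representatives define the same element of the field of meromorphic functions
  iff they agree on an open dense set.\<close>
definition ae_eq :: "(complex^'n::finite \<Rightarrow> complex) \<Rightarrow> (complex^'n \<Rightarrow> complex) \<Rightarrow> bool" where
  "ae_eq f g \<longleftrightarrow> (\<exists>U. open U \<and> closure U = UNIV \<and> (\<forall>z\<in>U. f z = g z))"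

definition swapc :: "'n::finite \<Rightarrow> 'n \<Rightarrow> complex^'n \<Rightarrow> complex^'n" where
  "swapc i j x = (\<chi> l. if l = i then x $ j else if l = j then x $ i else x $ l)"

text \<open>A model of the defining relations of the algebra A: a ring with a ring homomorphism
  emb from the field of meromorphic functions (given on representatives, compatible with
  the identification of representatives) and elements g i j = [ij] satisfying (i)--(iv).
  An identity holds in A iff it holds in every such model (A is the universal one).\<close>
definition A_model :: "complex \<Rightarrow> ('n::finite \<Rightarrow> complex) \<Rightarrow>
     ((complex^'n \<Rightarrow> complex) \<Rightarrow> 'a::ring_1) \<Rightarrow> ('n \<Rightarrow> 'n \<Rightarrow> 'a) \<Rightarrow> bool" where
  "A_model \<tau> lam emb g \<longleftrightarrow>
     emb (\<lambda>_. 1) = 1 \<and>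
     (\<forall>f h. meromorphic f \<and> meromorphic h \<longrightarrow> emb (\<lambda>x. f x + h x) = emb f + emb h) \<and>
     (\<forall>f h. meromorphic f \<and> meromorphic h \<longrightarrow> emb (\<lambda>x. f x * h x) = emb f * emb h) \<and>
     (\<forall>f h. meromorphic f \<and> meromorphic h \<and> ae_eq f h \<longrightarrow> emb f = emb h) \<and>
     (\<forall>i j. i \<noteq> j \<longrightarrow> g j i = - g i j) \<and>
     (\<forall>i j. i \<noteq> j \<longrightarrow>
        g i j * g i j = emb (\<lambda>x. wp \<tau> (lam i - lam j) - wp \<tau> (x $ i - x $ j))) \<and>
     (\<forall>i j p q. i \<noteq> j \<and> p \<noteq> q \<and> {i, j} \<inter> {p, q} = {} \<longrightarrow> g i j * g p q = g p q * g i j) \<and>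
     (\<forall>i j p. i \<noteq> j \<and> j \<noteq> p \<and> i \<noteq> p \<longrightarrow>
        g i j * g j p + g j p * g p i + g p i * g i j = 0) \<and>
     (\<forall>i j f. i \<noteq> j \<and> meromorphic f \<longrightarrow> g i j * emb f = emb (\<lambda>x. f (swapc i j x)) * g i j)"

end

theory Submission
  imports Defs "HOL-Complex_Analysis.Complex_Analysis"
begin


lemma lat_bound:
  assumes "Im \<tau> > 0"
  obtains C where "C > 0" "\<And>a b::real. \<bar>a\<bar> + \<bar>b\<bar> \<le> C * norm (of_real a + of_real b * \<tau>)"
proof -
  define C where "C = 1 + (1 + \<bar>Re \<tau>\<bar>) / Im \<tau>"
  have C: "C > 0" using assms unfolding C_def by (simp add: add_pos_nonneg)
  have "\<bar>a\<bar> + \<bar>b\<bar> \<le> C * norm (of_real a + of_real b * \<tau>)" for a b :: real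
  proof -
    define z where "z = of_real a + of_real b * \<tau>"
    have Im: "Im z = b * Im \<tau>" and Re: "Re z = a + b * Re \<tau>" unfolding z_def by simp_all
    have n1: "\<bar>Im z\<bar> \<le> norm z" and n2: "\<bar>Re z\<bar> \<le> norm z" by (rule abs_Im_le_cmod, rule abs_Re_le_cmod)
    have hb: "\<bar>b\<bar> \<le> norm z / Im \<tau>" using n1 Im assms by (simp add: abs_mult field_simps)
    have "\<bar>a\<bar> \<le> \<bar>Re z\<bar> + \<bar>b\<bar> * \<bar>Re \<tau>\<bar>" using Re by (simp add: abs_mult[symmetric])
    also have "\<dots> \<le> norm z + (norm z / Im \<tau>) * \<bar>Re \<tau>\<bar>"
      using n2 hb by (intro add_mono mult_right_mono) auto
    finally have "\<bar>a\<bar> + \<bar>b\<bar> \<le> norm z + (norm z / Im \<tau>) * \<bar>Re \<tau>\<bar> + norm z / Im \<tau>"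
      using hb by linarith
    also have "\<dots> = C * norm z" unfolding C_def using assms by (simp add: field_simps)
    finally show ?thesis unfolding z_def .
  qed
  then show ?thesis using C that by blast
qed

definition latmap :: "complex \<Rightarrow> int \<times> int \<Rightarrow> complex" where
  "latmap \<tau> p = of_int (fst p) + of_int (snd p) * \<tau>"

lemma lattice_image: "lattice \<tau> = latmap \<tau> ` UNIV"
proof
  show "lattice \<tau> \<subseteq> latmap \<tau> ` UNIV"
  proof
    fix w assume "w \<in> lattice \<tau>"
    then obtain a b where "w = of_int a + of_int b * \<tau>" unfolding lattice_def by auto
    then have "w = latmap \<tau> (a,b)" by (simp add: latmap_def)
    then show "w \<in> latmap \<tau> ` UNIV" by blast
  qed
  show "latmap \<tau> ` UNIV \<subseteq> lattice \<tau>" unfolding lattice_def latmap_def by auto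
qed

lemma lat_bound_int:
  assumes "Im \<tau> > 0"
  obtains C where "C > 0" "\<And>p. real_of_int (\<bar>fst p\<bar> + \<bar>snd p\<bar>) \<le> C * norm (latmap \<tau> p)"
proof -
  obtain C where C: "C > 0" "\<And>a b::real. \<bar>a\<bar> + \<bar>b\<bar> \<le> C * norm (of_real a + of_real b * \<tau>)"
    using lat_bound[OF assms] by blast
  have "real_of_int (\<bar>fst p\<bar> + \<bar>snd p\<bar>) \<le> C * norm (latmap \<tau> p)" for p
    using C(2)[of "of_int (fst p)" "of_int (snd p)"] by (simp add: latmap_def)
  then show ?thesis using C(1) that by blast
qed

lemma latmap_inj:
  assumes "Im \<tau> > 0"
  shows "inj (latmap \<tau>)"
proof (rule injI)
  fix p q assume eq: "latmap \<tau> p = latmap \<tau> q"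
  obtain C where C: "C > 0" "\<And>p. real_of_int (\<bar>fst p\<bar> + \<bar>snd p\<bar>) \<le> C * norm (latmap \<tau> p)"
    using lat_bound_int[OF assms] by blast
  have "latmap \<tau> (fst p - fst q, snd p - snd q) = latmap \<tau> p - latmap \<tau> q"
    by (simp add: latmap_def algebra_simps)
  then have "real_of_int (\<bar>fst p - fst q\<bar> + \<bar>snd p - snd q\<bar>) \<le> 0"
    using C(2)[of "(fst p - fst q, snd p - snd q)"] eq by (simp only: fst_conv snd_conv) simp
  then have "\<bar>fst p - fst q\<bar> + \<bar>snd p - snd q\<bar> \<le> 0" by (simp only: of_int_le_0_iff)
  then show "p = q" by (simp add: prod_eq_iff; arith)
qed

lemma lattice_finite_ball:
  assumes "Im \<tau> > 0"
  shows "finite {w \<in> lattice \<tau>. norm w \<le> R}"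
proof -
  obtain C where C: "C > 0" "\<And>p. real_of_int (\<bar>fst p\<bar> + \<bar>snd p\<bar>) \<le> C * norm (latmap \<tau> p)"
    using lat_bound_int[OF assms] by blast
  define N where "N = \<lceil>C * R\<rceil>"
  have "{w \<in> lattice \<tau>. norm w \<le> R} \<subseteq> latmap \<tau> ` ({-N..N} \<times> {-N..N})"
  proof
    fix w assume "w \<in> {w \<in> lattice \<tau>. norm w \<le> R}"
    then obtain p where p: "w = latmap \<tau> p" "norm (latmap \<tau> p) \<le> R" unfolding lattice_image by auto
    have "real_of_int (\<bar>fst p\<bar> + \<bar>snd p\<bar>) \<le> C * R"
      using C(2)[of p] p(2) C(1) by (smt (verit) mult_left_mono)
    then have "\<bar>fst p\<bar> + \<bar>snd p\<bar> \<le> N" unfolding N_def by linarith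
    then have "p \<in> {-N..N} \<times> {-N..N}" by (cases p) auto
    then show "w \<in> latmap \<tau> ` ({-N..N} \<times> {-N..N})" using p by auto
  qed
  then show ?thesis by (rule finite_subset) auto
qed

definition uu :: "int \<Rightarrow> real" where "uu a = 1 / ((1 + \<bar>a\<bar>) * sqrt (1 + \<bar>a\<bar>))"

lemma uu_nonneg: "uu a \<ge> 0" unfolding uu_def by simp

lemma vv_powr: "1 / ((1 + real n) * sqrt (1 + real n)) = real (Suc n) powr (-(3/2))"
proof -
  have x: "(0::real) < 1 + real n" by simp
  have "real (Suc n) powr (3/2) = real (Suc n) powr (1 + 1/2)" by simp
  also have "\<dots> = real (Suc n) * sqrt (real (Suc n))"
    by (simp only: powr_add powr_half_sqrt[of "real (Suc n)"] of_nat_0_le_iff) simp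
  finally have h: "real (Suc n) powr (3/2) = (1 + real n) * sqrt (1 + real n)" by simp
  have e: "real (Suc n) powr (-(3/2)) = inverse ((1 + real n) * sqrt (1 + real n))"
    by (simp only: powr_minus h)
  show ?thesis by (simp only: e inverse_eq_divide)
qed

lemma uu_summable: "uu summable_on UNIV"
proof -
  have "summable (\<lambda>n. real n powr (-(3/2)))" by (simp add: summable_real_powr_iff)
  then have s1: "summable (\<lambda>n. real (Suc n) powr (-(3/2)))" by (subst summable_Suc_iff)
  then have s2: "summable (\<lambda>n. real (Suc (Suc n)) powr (-(3/2)))" by (subst summable_Suc_iff)
  have p: "uu (int n) = real (Suc n) powr (-(3/2))" for n
    unfolding uu_def using vv_powr[of n] by simp
  have q: "uu (- 1 - int n) = real (Suc (Suc n)) powr (-(3/2))" for n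
    unfolding uu_def using vv_powr[of "Suc n"] by simp
  have A: "uu summable_on (int ` UNIV)" using s1
    by (subst summable_on_reindex) (auto simp: o_def p intro!: summable_nonneg_imp_summable_on s1)
  have B: "uu summable_on ((\<lambda>n. - int (Suc n)) ` UNIV)" using s2
    by (subst summable_on_reindex) (auto simp: o_def q inj_on_def uu_nonneg intro!: summable_nonneg_imp_summable_on)
  have U: "(UNIV::int set) = int ` UNIV \<union> (\<lambda>n. - int (Suc n)) ` UNIV"
  proof -
    have "x \<in> int ` UNIV \<union> (\<lambda>n. - int (Suc n)) ` UNIV" for x :: int
    proof (cases "x \<ge> 0")
      case True then show ?thesis by (metis UnI1 nonneg_int_cases rangeI)
    next
      case False
      then have "x = - int (Suc (nat (- x - 1)))" by simp
      then show ?thesis by blast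
    qed
    then show ?thesis by blast
  qed
  have disj: "int ` UNIV \<inter> (\<lambda>n. - int (Suc n)) ` UNIV = {}" by auto
  show ?thesis using summable_on_Un_disjoint[OF A B disj] U by simp
qed


lemma pair_summable: "(\<lambda>p. uu (fst p) * uu (snd p)) summable_on UNIV"
proof (rule nonneg_bdd_above_summable_on)
  show "\<And>x. x \<in> UNIV \<Longrightarrow> 0 \<le> uu (fst x) * uu (snd x)" using uu_nonneg by simp
  define S where "S = infsum uu UNIV"
  show "bdd_above (sum (\<lambda>p. uu (fst p) * uu (snd p)) ` {F. F \<subseteq> UNIV \<and> finite F})"
  proof (rule bdd_aboveI2)
    fix F :: "(int \<times> int) set" assume F: "F \<in> {F. F \<subseteq> UNIV \<and> finite F}"
    then have fin: "finite F" by simp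
    have "sum (\<lambda>p. uu (fst p) * uu (snd p)) F \<le> sum (\<lambda>p. uu (fst p) * uu (snd p)) (fst ` F \<times> snd ` F)"
      using fin uu_nonneg by (intro sum_mono2) (auto simp: mult_nonneg_nonneg intro: rev_image_eqI)
    also have "\<dots> = (\<Sum>x\<in>fst ` F. \<Sum>y\<in>snd ` F. uu x * uu y)"
      by (simp add: sum.cartesian_product case_prod_beta)
    also have "\<dots> = sum uu (fst ` F) * sum uu (snd ` F)" by (simp add: sum_product)
    also have "\<dots> \<le> S * S"
    proof (rule mult_mono)
      show "sum uu (fst ` F) \<le> S" unfolding S_def using fin uu_nonneg
        by (intro finite_sum_le_infsum uu_summable) auto
      show "sum uu (snd ` F) \<le> S" unfolding S_def using fin uu_nonneg
        by (intro finite_sum_le_infsum uu_summable) auto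
      show "0 \<le> S" unfolding S_def using uu_nonneg by (simp add: infsum_nonneg)
      show "0 \<le> sum uu (snd ` F)" using uu_nonneg by (simp add: sum_nonneg)
    qed
    finally show "sum (\<lambda>p. uu (fst p) * uu (snd p)) F \<le> S * S" .
  qed
qed

lemma pair_bound:
  fixes a b :: int
  shows "1 / (1 + \<bar>a\<bar> + \<bar>b\<bar>)^3 \<le> uu a * uu b"
proof -
  define A where "A = 1 + \<bar>real_of_int a\<bar>"
  define B where "B = 1 + \<bar>real_of_int b\<bar>"
  have A: "A \<ge> 1" and B: "B \<ge> 1" unfolding A_def B_def by auto
  have AB1: "1 \<le> A * B" using mult_mono[of 1 A 1 B] A B by simp
  have "(A + B - 1)^2 - A * B = (A - 1)^2 + (B - 1)^2 + (A * B - 1)"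
    by (simp add: power2_eq_square algebra_simps)
  also have "\<dots> \<ge> 0"
  proof -
    have "0 \<le> (A-1)^2" "0 \<le> (B-1)^2" by simp_all
    then show ?thesis using AB1 by linarith
  qed
  finally have "A * B \<le> (A + B - 1)^2" by simp
  then have "sqrt (A * B) \<le> sqrt ((A + B - 1)^2)" by (rule real_sqrt_le_mono)
  also have "\<dots> = A + B - 1" using A B by simp
  finally have s: "sqrt (A * B) \<le> A + B - 1" .
  have AB0: "0 \<le> A * B" using AB1 by simp
  have "sqrt (A * B) ^ 3 \<le> (A + B - 1)^3" by (rule power_mono[OF s]) (use AB0 in simp)
  moreover have "sqrt (A*B) ^ 3 = (A * sqrt A) * (B * sqrt B)"
  proof -
    have e1: "sqrt (A*B) ^ 3 = sqrt (A*B)^2 * sqrt (A*B)" by (simp add: power3_eq_cube power2_eq_square)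
    have e2: "sqrt (A*B)^2 = A*B" using AB0 by simp
    have e3: "sqrt (A*B) = sqrt A * sqrt B" by (simp add: real_sqrt_mult)
    have e4: "sqrt x ^ 3 = x * sqrt x" if "x \<ge> 0" for x :: real
      using that by (simp add: power3_eq_cube real_sqrt_mult_self)
    show ?thesis unfolding e3 power_mult_distrib using e4 A B by simp
  qed
  moreover have "A + B - 1 = 1 + \<bar>a\<bar> + \<bar>b\<bar>" unfolding A_def B_def by simp
  ultimately have le: "(A * sqrt A) * (B * sqrt B) \<le> (1 + \<bar>a\<bar> + \<bar>b\<bar>)^3" by simp
  have pos: "(A * sqrt A) * (B * sqrt B) > 0" using A B by simp
  have "uu a * uu b = 1 / ((A * sqrt A) * (B * sqrt B))" unfolding uu_def A_def B_def by simp
  then show ?thesis using le pos by (simp add: frac_le)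
qed

lemma lattice_summable3:
  assumes "Im \<tau> > 0"
  shows "(\<lambda>w. 1 / norm w ^ 3) summable_on (lattice \<tau> - {0})"
proof -
  obtain C where C: "C > 0" "\<And>p. real_of_int (\<bar>fst p\<bar> + \<bar>snd p\<bar>) \<le> C * norm (latmap \<tau> p)"
    using lat_bound_int[OF assms] by blast
  have inj: "inj_on (latmap \<tau>) (UNIV - {(0,0)})" using latmap_inj[OF assms] by (meson inj_on_subset subset_UNIV)
  have im: "lattice \<tau> - {0} = latmap \<tau> ` (UNIV - {(0,0)})"
  proof -
    have "latmap \<tau> (0,0) = 0" by (simp add: latmap_def)
    moreover have "latmap \<tau> ` (UNIV - {(0,0)}) = latmap \<tau> ` UNIV - latmap \<tau> ` {(0,0)}"
      by (rule image_set_diff[OF latmap_inj[OF assms]])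
    ultimately show ?thesis unfolding lattice_image by simp
  qed
  have bnd: "1 / norm (latmap \<tau> p) ^ 3 \<le> (8 * C^3) * (uu (fst p) * uu (snd p))" if p: "p \<noteq> (0,0)" for p
  proof -
    define K where "K = real_of_int (\<bar>fst p\<bar> + \<bar>snd p\<bar>)"
    have K1: "K \<ge> 1" unfolding K_def using p by (cases p) auto
    have Kn: "K \<le> C * norm (latmap \<tau> p)" using C(2) K_def by simp
    have npos: "norm (latmap \<tau> p) > 0" using Kn K1 C(1)
      by (smt (verit) mult_nonneg_nonpos norm_ge_zero)
    have "1 / norm (latmap \<tau> p) ^ 3 = C^3 / (C * norm (latmap \<tau> p))^3" using C(1) npos
      by (simp add: power_mult_distrib)
    also have "\<dots> \<le> C^3 / K^3"
      using K1 Kn C(1) by (intro divide_left_mono power_mono mult_pos_pos) auto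
    also have "\<dots> \<le> 8 * C^3 / (1 + K)^3"
    proof -
      have "(1 + K)^3 \<le> (2 * K)^3" using K1 by (intro power_mono) auto
      then have h: "(1+K)^3 / 8 \<le> K^3" by (simp add: power_mult_distrib)
      have "C^3 / K^3 \<le> C^3 / ((1+K)^3 / 8)"
        using K1 C(1) h by (intro frac_le) auto
      also have "C^3 / ((1+K)^3 / 8) = 8 * C^3 / (1 + K)^3" by simp
      finally show ?thesis .
    qed
    also have "\<dots> = (8 * C^3) * (1 / (1 + \<bar>fst p\<bar> + \<bar>snd p\<bar>)^3)" unfolding K_def by (simp add: add.assoc)
    also have "\<dots> \<le> (8 * C^3) * (uu (fst p) * uu (snd p))"
      using pair_bound[of "fst p" "snd p"] C(1) by (intro mult_left_mono) auto
    finally show ?thesis .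
  qed
  have "(\<lambda>p. uu (fst p) * uu (snd p)) summable_on (UNIV - {(0,0)})"
    by (rule summable_on_subset_banach[OF pair_summable]) simp
  then have s8: "(\<lambda>p. (8 * C^3) * (uu (fst p) * uu (snd p))) summable_on (UNIV - {(0,0)})"
    by (rule summable_on_cmult_right)
  have "((\<lambda>w. 1 / norm w ^ 3) \<circ> latmap \<tau>) summable_on (UNIV - {(0,0)})"
  proof (rule summable_on_comparison_test[OF s8])
    fix x assume "x \<in> UNIV - {(0::int, 0::int)}"
    then show "((\<lambda>w. 1 / norm w ^ 3) \<circ> latmap \<tau>) x \<le> 8 * C ^ 3 * (uu (fst x) * uu (snd x))"
      using bnd[of x] by (simp only: o_apply) blast
    show "0 \<le> ((\<lambda>w. 1 / norm w ^ 3) \<circ> latmap \<tau>) x" by simp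
  qed
  then show ?thesis unfolding im summable_on_reindex[OF inj] .
qed



definition fw :: "complex \<Rightarrow> complex \<Rightarrow> complex" where
  "fw w z = 1 / (z - w)^2 - 1 / w^2"

lemma fw_bound:
  assumes R: "R > 0" and z: "norm z \<le> R" and w: "norm w > 2 * R"
  shows "norm (fw w z) \<le> (10 * R) * (1 / norm w ^ 3)"
proof -
  define n where "n = norm w"
  have n: "n > 2 * R" using w n_def by simp
  have zw: "z \<noteq> w" using z n n_def R by auto
  have w0: "w \<noteq> 0" using n n_def R by auto
  have d: "norm (z - w) \<ge> n / 2"
    using norm_triangle_ineq2[of w z] z n n_def by (simp add: norm_minus_commute)
  have e1: "fw w z = (w^2 - (z-w)^2) / ((z - w)^2 * w^2)"
    unfolding fw_def using zw w0 by (simp add: diff_frac_eq)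
  have e2: "w^2 - (z-w)^2 = z * (2 * w - z)" by (simp add: power2_eq_square algebra_simps)
  have e: "fw w z = z * (2 * w - z) / ((z - w)^2 * w^2)" using e1 e2 by simp
  have num: "norm (z * (2 * w - z)) \<le> R * (5/2 * n)"
  proof -
    have "norm (2 * w - z) \<le> norm (2*w) + norm z" by (rule norm_triangle_ineq4)
    also have "\<dots> \<le> 5/2 * n" using z n n_def by (simp add: norm_mult)
    finally have "norm (2 * w - z) \<le> 5/2 * n" .
    then show ?thesis unfolding norm_mult using z R by (intro mult_mono) auto
  qed
  have den: "(n/2)^2 * n^2 \<le> norm ((z - w)^2 * w^2)"
    unfolding norm_mult norm_power n_def[symmetric] using d n R
    by (intro mult_right_mono power_mono) auto
  have dpos: "0 < (n/2)^2 * n^2" using n R by simp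
  have "norm (fw w z) = norm (z * (2 * w - z)) / norm ((z - w)^2 * w^2)" unfolding e by (simp add: norm_divide)
  also have "\<dots> \<le> (R * (5/2 * n)) / ((n/2)^2 * n^2)"
    using num den dpos R n by (intro frac_le) auto
  also have "\<dots> = (10 * R) * (1 / n ^ 3)" using n R by (simp add: field_simps power2_eq_square power3_eq_cube)
  finally show ?thesis unfolding n_def .
qed

lemma tail_facts:
  assumes tau: "Im \<tau> > 0" and R: "R > 0"
  defines "T \<equiv> lattice \<tau> - {w. norm w \<le> 2 * R}"
  shows "\<And>z. z \<in> cball 0 R \<Longrightarrow> (\<lambda>w. fw w z) summable_on T"
    and "(\<lambda>z. infsum (\<lambda>w. fw w z) T) holomorphic_on ball 0 R"
proof -
  have TL: "T \<subseteq> lattice \<tau> - {0}" unfolding T_def using R by auto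
  have Ms: "(\<lambda>w. (10 * R) * (1 / norm w ^ 3)) summable_on T"
    by (intro summable_on_cmult_right summable_on_subset_banach[OF lattice_summable3[OF tau] TL])
  have bnd: "norm (fw w z) \<le> (10 * R) * (1 / norm w ^ 3)" if "w \<in> T" "z \<in> cball 0 R" for w z
    using that R by (intro fw_bound) (auto simp: T_def)
  show sm: "(\<lambda>w. fw w z) summable_on T" if "z \<in> cball 0 R" for z
  proof -
    have "(\<lambda>w. norm (fw w z)) summable_on T"
      by (rule summable_on_comparison_test[OF Ms]) (use bnd that in auto)
    then show ?thesis by (rule abs_summable_summable)
  qed
  have ul: "uniform_limit (cball 0 R) (\<lambda>X z. \<Sum>w\<in>X. fw w z) (\<lambda>z. infsum (\<lambda>w. fw w z) T) (finite_subsets_at_top T)"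
    by (rule Weierstrass_m_test_general[OF bnd Ms])
  have ev: "\<forall>\<^sub>F X in finite_subsets_at_top T. continuous_on (cball 0 R) (\<lambda>z. \<Sum>w\<in>X. fw w z) \<and>
      (\<lambda>z. \<Sum>w\<in>X. fw w z) holomorphic_on ball 0 R"
  proof (rule eventually_finite_subsets_at_top_weakI)
    fix X assume X: "finite X" "X \<subseteq> T"
    have ne: "z - w \<noteq> 0" if "w \<in> X" "z \<in> cball 0 R" for w z
      using that X R by (auto simp: T_def dist_norm)
    have h: "(\<lambda>z. \<Sum>w\<in>X. fw w z) holomorphic_on cball 0 R"
      unfolding fw_def using ne by (intro holomorphic_intros) auto
    show "continuous_on (cball 0 R) (\<lambda>z. \<Sum>w\<in>X. fw w z) \<and> (\<lambda>z. \<Sum>w\<in>X. fw w z) holomorphic_on ball 0 R"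
      using h holomorphic_on_imp_continuous_on holomorphic_on_subset ball_subset_cball by blast
  qed
  show "(\<lambda>z. infsum (\<lambda>w. fw w z) T) holomorphic_on ball 0 R"
    by (rule holomorphic_uniform_limit[OF ev ul]) simp_all
qed

lemma wp_local:
  assumes tau: "Im \<tau> > 0" and R: "R > 0"
  obtains P G where "P holomorphic_on ball 0 R" "G holomorphic_on ball 0 R" "\<exists>z\<in>ball 0 R. P z \<noteq> 0"
    "\<And>z. z \<in> ball 0 R \<Longrightarrow> P z \<noteq> 0 \<Longrightarrow> wp \<tau> z = G z / P z"
proof -
  define S where "S = {w \<in> lattice \<tau>. norm w \<le> 2*R}"
  define T where "T = lattice \<tau> - {w. norm w \<le> 2*R}"
  have finS: "finite S" unfolding S_def by (rule lattice_finite_ball[OF tau])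
  have "0 \<in> lattice \<tau>" unfolding lattice_def
    by (rule CollectI, rule exI[of _ 0], rule exI[of _ 0]) simp
  moreover have "0 \<le> 2 * R" using assms(2) by simp
  ultimately have S0: "0 \<in> S" unfolding S_def by simp
  have LT: "lattice \<tau> - {0} = (S - {0}) \<union> T" unfolding S_def T_def using assms(2) by auto
  have disj: "(S - {0}) \<inter> T = {}" unfolding S_def T_def by auto
  define h where "h z = infsum (\<lambda>w. fw w z) T" for z
  have hh: "h holomorphic_on ball 0 R"
    unfolding h_def T_def using tail_facts(2)[OF tau R] by simp
  have split: "wp \<tau> z = 1/z^2 + (\<Sum>w\<in>S-{0}. fw w z) + h z" if z: "z \<in> ball 0 R" for z
  proof -
    have fe: "(\<lambda>\<omega>. 1 / (z - \<omega>)^2 - 1 / \<omega>^2) = (\<lambda>w. fw w z)" by (simp add: fw_def fun_eq_iff)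
    have sT: "(\<lambda>w. fw w z) summable_on T" unfolding T_def using tail_facts(1)[OF tau R] z by auto
    have "infsum (\<lambda>w. fw w z) (lattice \<tau> - {0}) = infsum (\<lambda>w. fw w z) (S - {0}) + h z"
      unfolding LT h_def using finS sT disj by (intro infsum_Un_disjoint) auto
    then show ?thesis unfolding wp_def fe using finS by simp
  qed
  define P where "P z = (\<Prod>w\<in>S. (z - w)^2)" for z
  define G where "G z = (\<Sum>w\<in>S. \<Prod>w'\<in>S-{w}. (z - w')^2) - P z * (\<Sum>w\<in>S-{0}. 1/w^2) + h z * P z" for z
  have hP: "P holomorphic_on ball 0 R" unfolding P_def by (intro holomorphic_intros)
  have hG: "G holomorphic_on ball 0 R" unfolding G_def P_def using hh by (intro holomorphic_intros) auto
  have nz: "\<exists>z\<in>ball 0 R. P z \<noteq> 0"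
  proof -
    have inf: "infinite (of_real ` {0<..<R} :: complex set)"
      using R by (subst finite_image_iff) (auto simp: inj_on_def)
    have "\<not> (of_real ` {0<..<R} :: complex set) \<subseteq> S" using inf finS finite_subset by blast
    then obtain y where y: "y \<in> (of_real ` {0<..<R} :: complex set)" "y \<notin> S" by blast
    then obtain t where t: "t \<in> {0<..<R}" "complex_of_real t \<notin> S" by blast
    have "P (of_real t) \<noteq> 0" unfolding P_def using finS t(2) by (auto simp: prod_zero_iff)
    moreover have "complex_of_real t \<in> ball 0 R" using t(1) by auto
    ultimately show ?thesis by blast
  qed
  have quot: "wp \<tau> z = G z / P z" if z: "z \<in> ball 0 R" and Pz: "P z \<noteq> 0" for z
  proof -
    have zS: "z - w \<noteq> 0" if "w \<in> S" for w using Pz that finS unfolding P_def by (auto simp: prod_zero_iff)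
    have q: "(\<Prod>w'\<in>S-{w}. (z-w')^2) = P z / (z-w)^2" if "w \<in> S" for w
      unfolding P_def using prod.remove[OF finS that, of "\<lambda>w'. (z-w')^2"] zS[OF that] by simp
    have s1: "(\<Sum>w\<in>S. \<Prod>w'\<in>S-{w}. (z - w')^2) = P z / z^2 + (\<Sum>w\<in>S-{0}. P z / (z-w)^2)"
    proof -
      have "(\<Sum>w\<in>S. \<Prod>w'\<in>S-{w}. (z - w')^2) = (\<Sum>w\<in>S. P z / (z-w)^2)" using q by simp
      also have "\<dots> = P z / (z-0)^2 + (\<Sum>w\<in>S-{0}. P z / (z-w)^2)" by (rule sum.remove[OF finS S0])
      finally show ?thesis by simp
    qed
    have s2: "(\<Sum>w\<in>S-{0}. fw w z) * P z = (\<Sum>w\<in>S-{0}. P z / (z-w)^2) - P z * (\<Sum>w\<in>S-{0}. 1/w^2)"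
    proof -
      have "(\<Sum>w\<in>S-{0}. fw w z) * P z = (\<Sum>w\<in>S-{0}. P z / (z-w)^2 - P z * (1/w^2))"
        unfolding sum_distrib_right fw_def by (intro sum.cong refl) (simp add: algebra_simps)
      also have "\<dots> = (\<Sum>w\<in>S-{0}. P z / (z-w)^2) - P z * (\<Sum>w\<in>S-{0}. 1/w^2)"
        by (simp add: sum_subtractf sum_distrib_left)
      finally show ?thesis .
    qed
    have z0: "z \<noteq> 0" using zS[OF S0] by simp
    have "wp \<tau> z * P z = P z / z^2 + (\<Sum>w\<in>S-{0}. fw w z) * P z + h z * P z"
      unfolding split[OF z] by (simp add: algebra_simps)
    also have "\<dots> = G z" unfolding G_def s1 s2 by (simp add: algebra_simps)
    finally show ?thesis using Pz by (simp add: field_simps)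
  qed
  show ?thesis using that hP hG nz quot by blast
qed

lemma holo_comp:
  fixes F :: "complex \<Rightarrow> complex" and u v :: "'n::finite"
  assumes "F holomorphic_on B" "open B"
  shows "holo_on (\<lambda>x::complex^'n. F (x$u - x$v)) {x. x$u - x$v \<in> B}"
  unfolding holo_on_def
proof (intro conjI ballI)
  have c: "continuous_on UNIV (\<lambda>x::complex^'n. x$u - x$v)" by (intro continuous_intros)
  show "open {x::complex^'n. x$u - x$v \<in> B}"
    using open_vimage[OF assms(2) c] by (simp add: vimage_def)
  fix z :: "complex^'n" assume z: "z \<in> {x. x$u - x$v \<in> B}"
  have dF: "(F has_derivative (*) (deriv F (z$u - z$v))) (at (z$u - z$v))"
    using z by (intro has_field_derivative_imp_has_derivative holomorphic_derivI[OF assms]) auto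
  have bl: "bounded_linear (\<lambda>x::complex^'n. x$u - x$v)"
    by (intro bounded_linear_sub bounded_linear_vec_nth)
  have dl: "((\<lambda>x::complex^'n. x$u - x$v) has_derivative (\<lambda>x. x$u - x$v)) (at z)"
    by (rule bounded_linear_imp_has_derivative[OF bl])
  show "\<exists>D. ((\<lambda>x. F (x$u - x$v)) has_derivative D) (at z) \<and> (\<forall>(c::complex) v'. D (c *s v') = c * D v')"
  proof (intro exI conjI allI)
    show "((\<lambda>x. F (x$u - x$v)) has_derivative (\<lambda>x. deriv F (z$u - z$v) * (x$u - x$v))) (at z)"
      using has_derivative_compose[OF dl dF] by simp
    fix c :: complex and v' :: "complex^'n"
    show "deriv F (z$u - z$v) * ((c *s v')$u - (c *s v')$v) = c * (deriv F (z$u - z$v) * (v'$u - v'$v))"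
      by (simp add: algebra_simps)
  qed
qed

lemma mero_const: "meromorphic (\<lambda>_::complex^'n::finite. c)"
  unfolding meromorphic_def
proof
  fix p :: "complex^'n"
  have h: "holo_on (\<lambda>_::complex^'n. d) UNIV" for d :: complex
    unfolding holo_on_def by (auto intro!: exI[of _ "\<lambda>_. 0"])
  show "\<exists>U g h. p \<in> U \<and> connected U \<and> holo_on g U \<and> holo_on h U \<and> (\<exists>z\<in>U. h z \<noteq> 0) \<and>
      (\<forall>z\<in>U. h z \<noteq> 0 \<longrightarrow> c = g z / h z)"
    by (rule exI[of _ UNIV], rule exI[of _ "\<lambda>_. c"], rule exI[of _ "\<lambda>_. 1"]) (simp add: h connected_UNIV)
qed

lemma mero_wp:
  fixes u v :: "'n::finite"
  assumes tau: "Im \<tau> > 0" and uv: "u \<noteq> v"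
  shows "meromorphic (\<lambda>x::complex^'n. c - wp \<tau> (x$u - x$v))"
  unfolding meromorphic_def
proof
  fix p :: "complex^'n"
  define R where "R = norm (p$u - p$v) + 1"
  have R: "R > 0" unfolding R_def by (simp add: add_nonneg_pos)
  obtain P G where PG: "P holomorphic_on ball 0 R" "G holomorphic_on ball 0 R" "\<exists>z\<in>ball 0 R. P z \<noteq> 0"
    "\<And>z. z \<in> ball 0 R \<Longrightarrow> P z \<noteq> 0 \<Longrightarrow> wp \<tau> z = G z / P z"
    using wp_local[OF tau R] by blast
  define U where "U = {x::complex^'n. x$u - x$v \<in> ball 0 R}"
  have pU: "p \<in> U" unfolding U_def R_def by simp
  have lin: "linear (\<lambda>x::complex^'n. x$u - x$v)"
    by (intro bounded_linear.linear bounded_linear_sub bounded_linear_vec_nth)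
  have "convex U" unfolding U_def using convex_linear_vimage[OF lin convex_ball[of 0 R]]
    by (simp add: vimage_def)
  then have cU: "connected U" by (rule convex_connected)
  have hg: "holo_on (\<lambda>x::complex^'n. c * P (x$u - x$v) - G (x$u - x$v)) U"
  proof -
    have "(\<lambda>z. c * P z - G z) holomorphic_on ball 0 R" using PG(1,2) by (intro holomorphic_intros)
    from holo_comp[OF this open_ball, of u v] show ?thesis unfolding U_def by simp
  qed
  have hh: "holo_on (\<lambda>x::complex^'n. P (x$u - x$v)) U"
    unfolding U_def using holo_comp[of P "ball 0 R" u v] PG(1) by auto
  obtain z0 where z0: "z0 \<in> ball 0 R" "P z0 \<noteq> 0" using PG(3) by blast
  define x0 :: "complex^'n" where "x0 = (\<chi> l. if l = u then z0 else 0)"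
  have x0: "x0$u - x0$v = z0" unfolding x0_def using uv by simp
  have ex: "\<exists>z\<in>U. P (z$u - z$v) \<noteq> 0" using x0 z0 unfolding U_def by (intro bexI[of _ x0]) auto
  have q: "\<forall>z\<in>U. P (z$u - z$v) \<noteq> 0 \<longrightarrow>
      c - wp \<tau> (z$u - z$v) = (c * P (z$u - z$v) - G (z$u - z$v)) / P (z$u - z$v)"
    using PG(4) unfolding U_def by (auto simp: field_simps)
  show "\<exists>U g h. p \<in> U \<and> connected U \<and> holo_on g U \<and> holo_on h U \<and> (\<exists>z\<in>U. h z \<noteq> 0) \<and>
      (\<forall>z\<in>U. h z \<noteq> 0 \<longrightarrow> c - wp \<tau> (z$u - z$v) = g z / h z)"
    using pU cU hg hh ex q by blast
qed



lemma neg1_comm: "x * (-1)^n = (-1)^n * (x::'a::ring_1)"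
  by (cases "even n") simp_all
lemma neg1_comm2: "x * ((-1)^n * y) = (-1)^n * ((x::'a::ring_1) * y)"
  by (metis mult.assoc neg1_comm)

lemma neg1_sq: "(-1)^n * ((-1)^n * x) = (x::'a::ring_1)"
  by (simp add: mult.assoc[symmetric] flip: power_add)

locale galg =
  fixes g :: "'n \<Rightarrow> 'n \<Rightarrow> 'a::ring_1"
  assumes anti: "i \<noteq> j \<Longrightarrow> g j i = - g i j"
  and comm: "i\<noteq>j \<Longrightarrow> p\<noteq>q \<Longrightarrow> i\<noteq>p \<Longrightarrow> i\<noteq>q \<Longrightarrow> j\<noteq>p \<Longrightarrow> j\<noteq>q \<Longrightarrow> g i j * g p q = g p q * g i j"
  and rel: "x\<noteq>y \<Longrightarrow> y\<noteq>z \<Longrightarrow> x\<noteq>z \<Longrightarrow> g y z * g x z = g x y * g y z - g x z * g x y"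
begin

definition star :: "'n \<Rightarrow> 'n list \<Rightarrow> 'a" where "star c xs = prod_list (map (g c) xs)"
definition gm :: "'n \<Rightarrow> 'n list \<Rightarrow> 'a" where "gm m xs = prod_list (map (\<lambda>b. g b m) xs)"

lemma star_simps[simp]: "star c [] = 1" "star c (x#xs) = g c x * star c xs"
  "star c (xs @ ys) = star c xs * star c ys"
  by (simp_all add: star_def)
lemma gm_simps[simp]: "gm m [] = 1" "gm m (x#xs) = g x m * gm m xs"
  "gm m (xs @ ys) = gm m xs * gm m ys"
  by (simp_all add: gm_def)

lemma comm_star:
  assumes "b \<noteq> a" "b \<noteq> m" "a \<noteq> m" "\<forall>x\<in>set xs. x \<noteq> b \<and> x \<noteq> m \<and> x \<noteq> a"
  shows "g b m * star a xs = star a xs * g b m"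
  using assms(4)
proof (induction xs)
  case Nil then show ?case by simp
next
  case (Cons x xs)
  have "g b m * g a x = g a x * g b m" using Cons.prems assms(1-3)
    by (intro comm) auto
  then have "g b m * star a (x#xs) = g a x * (g b m * star a xs)"
    by (simp add: mult.assoc[symmetric])
  also have "\<dots> = star a (x#xs) * g b m" using Cons by (simp add: mult.assoc)
  finally show ?case .
qed

lemma comm_gm_star:
  assumes "\<forall>y\<in>set ys. y \<noteq> a \<and> y \<noteq> m" "a \<noteq> m" "\<forall>x\<in>set xs. x \<notin> set ys \<and> x \<noteq> m \<and> x \<noteq> a"
  shows "gm m ys * star a xs = star a xs * gm m ys"
  using assms(1,3)
proof (induction ys)
  case Nil then show ?case by simp
next
  case (Cons y ys)
  have "g y m * star a xs = star a xs * g y m" using Cons.prems assms(2)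
    by (intro comm_star) auto
  then show ?case using Cons by (simp add: mult.assoc) (metis mult.assoc)
qed

lemma push:
  assumes "distinct (a # m # bs)"
  shows "g a m * star a bs = (\<Sum>j<length bs. (-1)^j * star a (drop j bs) * gm m (take (Suc j) bs))
           + (-1)^(length bs) * gm m bs * g a m"
  using assms
proof (induction bs)
  case Nil then show ?case by simp
next
  case (Cons b cs)
  have d: "a \<noteq> b" "b \<noteq> m" "a \<noteq> m" using Cons.prems by auto
  have r: "g a m * g a b = g a b * g b m - g b m * g a m"
    using rel[of a b m] d by (simp add: algebra_simps)
  have c1: "g b m * star a cs = star a cs * g b m"
    using Cons.prems by (intro comm_star) auto
  have c2: "\<And>j. g b m * star a (drop j cs) = star a (drop j cs) * g b m"
    using Cons.prems by (intro comm_star) (auto dest: in_set_dropD)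
  have IH: "g a m * star a cs = (\<Sum>j<length cs. (-1)^j * star a (drop j cs) * gm m (take (Suc j) cs))
           + (-1)^(length cs) * gm m cs * g a m" using Cons by auto
  have "g a m * star a (b#cs) = (g a m * g a b) * star a cs"
    by (simp add: mult.assoc)
  also have "\<dots> = g a b * g b m * star a cs - g b m * (g a m * star a cs)"
    unfolding r by (simp add: algebra_simps)
  also have "\<dots> = g a b * star a cs * g b m -
      ((\<Sum>j<length cs. (-1)^j * (g b m * star a (drop j cs)) * gm m (take (Suc j) cs))
           + (-1)^(length cs) * (g b m * gm m cs) * g a m)"
    unfolding IH by (simp add: mult.assoc c1 sum_distrib_left algebra_simps neg1_comm2)
  also have "\<dots> = (\<Sum>j<length (b#cs). (-1)^j * star a (drop j (b#cs)) * gm m (take (Suc j) (b#cs)))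
           + (-1)^(length (b#cs)) * gm m (b#cs) * g a m"
    unfolding c2 by (simp del: sum.lessThan_Suc add: sum.lessThan_Suc_shift mult.assoc sum_negf algebra_simps)
  finally show ?case .
qed

lemma gm_star:
  assumes "c \<notin> set xs"
  shows "gm c xs = (-1)^length xs * star c xs"
  using assms
proof (induction xs)
  case Nil then show ?case by simp
next
  case (Cons x xs)
  then have "g x c = - g c x" using anti[of c x] by auto
  then show ?case using Cons by (simp add: neg1_comm2)
qed

lemma Jp:
  assumes "distinct (a # c # U)"
  shows "star c (U @ [a]) = - (\<Sum>t<Suc (length U). star a (drop t (c#U)) * star c (take t U))"
proof -
  have P: "g a c * star a U = (\<Sum>j<length U. (-1)^j * star a (drop j U) * gm c (take (Suc j) U))
           + (-1)^(length U) * gm c U * g a c"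
    using push[of a c U] assms by simp
  have cU: "c \<notin> set U" using assms by auto
  have t1: "(-1)^j * star a (drop j U) * gm c (take (Suc j) U) = - (star a (drop j U) * star c (take (Suc j) U))"
    if "j < length U" for j
  proof -
    have "c \<notin> set (take (Suc j) U)" using cU by (meson in_set_takeD)
    then have "gm c (take (Suc j) U) = (-1)^(Suc j) * star c (take (Suc j) U)"
      using that by (simp add: gm_star)
    moreover have "star a (drop j U) * ((-1)^(Suc j) * star c (take (Suc j) U))
       = (-1)^(Suc j) * (star a (drop j U) * star c (take (Suc j) U))" by (rule neg1_comm2)
    moreover have "(-1)^j * ((-1)^(Suc j) * X) = - (X::'a)" for X
      by (simp add: mult.assoc[symmetric] flip: power_add)
    ultimately show ?thesis by (simp add: mult.assoc)
  qed
  have t2: "(-1)^(length U) * gm c U * g a c = star c U * g a c"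
    using cU by (simp add: gm_star neg1_sq)
  have ca: "g c a = - g a c" using anti[of a c] assms by auto
  have "star c (U @ [a]) = - (star c U * g a c)" by (simp add: ca)
  also have "star c U * g a c = g a c * star a U + (\<Sum>j<length U. star a (drop j U) * star c (take (Suc j) U))"
    using P t1 t2 by (simp add: sum_negf)
  also have "\<dots> = (\<Sum>t<Suc (length U). star a (drop t (c#U)) * star c (take t U))"
    by (simp del: sum.lessThan_Suc add: sum.lessThan_Suc_shift)
  finally show ?thesis .
qed

end

locale galg2 = galg g for g :: "'n \<Rightarrow> 'n \<Rightarrow> 'a::ring_1" +
  fixes E :: "'n \<Rightarrow> 'a" and m :: 'n
  assumes Ecomm: "u \<noteq> v \<Longrightarrow> E x * g u v = g u v * E x"
  and key: "a \<noteq> b \<Longrightarrow> a \<noteq> m \<Longrightarrow> b \<noteq> m \<Longrightarrow>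
     g a m * g a m * g a b = g a b * (g b m * g b m) + (E a - E b) * g a b"
begin

definition Lw :: "'n list \<Rightarrow> 'a" where
  "Lw s = (\<Sum>c<length s. gm m (drop c s) * gm m (take (Suc c) s))"
definition Rw :: "'n list \<Rightarrow> 'a" where
  "Rw s = (\<Sum>c<length s. E (s!c) * star (s!c) (drop (Suc c) s) * star (s!c) (take c s))"

lemma E_star: "c \<notin> set xs \<Longrightarrow> E x * star c xs = star c xs * E x"
proof (induction xs)
  case Nil then show ?case by simp
next
  case (Cons y xs)
  then have "E x * g c y = g c y * E x" by (intro Ecomm) auto
  then show ?case using Cons by (simp add: mult.assoc[symmetric]) (simp add: mult.assoc)
qed

lemma tri_swap:
  fixes G :: "nat \<Rightarrow> nat \<Rightarrow> 'b::comm_monoid_add"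
  shows "(\<Sum>l<r. \<Sum>j\<le>l. G j (l - j)) = (\<Sum>j<r. \<Sum>t<r-j. G j t)"
proof -
  have "(\<Sum>l<r. \<Sum>j\<le>l. G j (l - j)) = (\<Sum>(j,t)\<in>{(j,t). j+t<r}. G j t)"
    by (rule sum.triangle_reindex[symmetric])
  also have "{(j,t). j+t<r} = Sigma {..<r} (\<lambda>j. {..<r-j})" by auto
  also have "(\<Sum>(j,t)\<in>Sigma {..<r} (\<lambda>j. {..<r-j}). G j t) = (\<Sum>j<r. \<Sum>t<r-j. G j t)"
    by (rule sum.Sigma[symmetric]) auto
  finally show ?thesis .
qed

lemma D3:
  assumes "distinct (a#bs)"
  shows "Rw (a#bs) = E a * star a bs - (\<Sum>l<length bs. star a (drop l bs) * Rw (take (Suc l) bs))"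
proof -
  define r where "r = length bs"
  define G where "G j t = E (bs!j) * (star a (drop (j+t) bs) * star (bs!j) (take t (drop (Suc j) bs))
       * star (bs!j) (take j bs))" for j t
  have s1: "Rw (a#bs) = E a * star a bs +
     (\<Sum>j<r. E (bs!j) * star (bs!j) (drop (Suc j) bs) * star (bs!j) (a # take j bs))"
    unfolding Rw_def r_def by (simp del: sum.lessThan_Suc add: sum.lessThan_Suc_shift)
  have s2: "E (bs!j) * star (bs!j) (drop (Suc j) bs) * star (bs!j) (a # take j bs) = - (\<Sum>t<r-j. G j t)"
    if j: "j < r" for j
  proof -
    define c where "c = bs!j"
    define U where "U = drop (Suc j) bs"
    have cU: "c # U = drop j bs" unfolding c_def U_def using j r_def by (simp add: Cons_nth_drop_Suc)
    have dis: "distinct (a # c # U)" unfolding cU using assms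
      by (auto dest: in_set_dropD simp: distinct_drop)
    have lU: "Suc (length U) = r - j" unfolding U_def r_def using j r_def by simp
    have "star c (drop (Suc j) bs) * star c (a # take j bs) = star c (U @ [a]) * star c (take j bs)"
      by (simp add: U_def mult.assoc)
    also have "\<dots> = - (\<Sum>t<r-j. star a (drop (j+t) bs) * star c (take t U)) * star c (take j bs)"
    proof -
      have "(\<Sum>t<Suc (length U). star a (drop t (c#U)) * star c (take t U)) =
            (\<Sum>t<r-j. star a (drop (j+t) bs) * star c (take t U))"
        unfolding lU cU drop_drop by (simp add: add.commute)
      then show ?thesis using Jp[OF dis] by simp
    qed
    finally have "E c * star c (drop (Suc j) bs) * star c (a # take j bs) =
        E c * (- (\<Sum>t<r-j. star a (drop (j+t) bs) * star c (take t U)) * star c (take j bs))"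
      by (simp add: mult.assoc)
    then show ?thesis unfolding G_def c_def[symmetric] U_def[symmetric]
      by (simp add: sum_distrib_left sum_distrib_right sum_negf mult.assoc)
  qed
  have s3: "star a (drop l bs) * Rw (take (Suc l) bs) = (\<Sum>j\<le>l. G j (l - j))" if l: "l < r" for l
  proof -
    have len: "length (take (Suc l) bs) = Suc l" using l r_def by simp
    have "Rw (take (Suc l) bs) = (\<Sum>j\<le>l. E (bs!j) * star (bs!j) (take (l-j) (drop (Suc j) bs)) *
          star (bs!j) (take j bs))"
      unfolding Rw_def len lessThan_Suc_atMost
      by (intro sum.cong refl) (simp add: drop_take min_def)
    also have "star a (drop l bs) * \<dots> = (\<Sum>j\<le>l. G j (l - j))"
      unfolding sum_distrib_left G_def
    proof (intro sum.cong refl)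
      fix j assume "j \<in> {..l}"
      then have jl: "j \<le> l" by simp
      have "a \<notin> set (drop l bs)" using assms by (auto dest: in_set_dropD)
      then have "star a (drop l bs) * E (bs!j) = E (bs!j) * star a (drop l bs)"
        by (simp add: E_star)
      then show "star a (drop l bs) * (E (bs!j) * star (bs!j) (take (l-j) (drop (Suc j) bs)) *
          star (bs!j) (take j bs)) = E (bs!j) * (star a (drop (j + (l-j)) bs) *
          star (bs!j) (take (l-j) (drop (Suc j) bs)) * star (bs!j) (take j bs))"
        using jl by (simp add: mult.assoc[symmetric])
    qed
    finally show ?thesis .
  qed
  have "(\<Sum>l<r. star a (drop l bs) * Rw (take (Suc l) bs)) = (\<Sum>l<r. \<Sum>j\<le>l. G j (l - j))"
    using s3 by simp
  also have "\<dots> = (\<Sum>j<r. \<Sum>t<r-j. G j t)" by (rule tri_swap)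
  finally have "(\<Sum>l<r. star a (drop l bs) * Rw (take (Suc l) bs)) = (\<Sum>j<r. \<Sum>t<r-j. G j t)" .
  moreover have "Rw (a#bs) = E a * star a bs - (\<Sum>j<r. \<Sum>t<r-j. G j t)"
    unfolding s1 using s2 by (simp add: sum_negf)
  ultimately show ?thesis unfolding r_def by simp
qed

lemma Lw_cons: "Lw (a#bs) = g a m * gm m bs * g a m +
   (\<Sum>j<length bs. gm m (drop j bs) * g a m * gm m (take (Suc j) bs))"
  unfolding Lw_def by (simp del: sum.lessThan_Suc add: sum.lessThan_Suc_shift mult.assoc)

lemma Lw_take:
  assumes "l < length bs"
  shows "Lw (take (Suc l) bs) = (\<Sum>j\<le>l. gm m (take (Suc (l-j)) (drop j bs)) * gm m (take (Suc j) bs))"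
proof -
  have len: "length (take (Suc l) bs) = Suc l" using assms by simp
  show ?thesis unfolding Lw_def len lessThan_Suc_atMost
    by (intro sum.cong refl) (simp add: drop_take min_def Suc_diff_le)
qed

lemma D1:
  assumes "distinct (a#m#bs)"
  shows "g a m * g a m * star a bs = (-1)^length bs * Lw (a#bs) +
     (\<Sum>l<length bs. (-1)^l * star a (drop l bs) * Lw (take (Suc l) bs))"
proof -
  define r where "r = length bs"
  define A where "A = g a m"
  define H where "H j t = (-1)^(j+t) * star a (drop (j+t) bs) * (gm m (take (Suc t) (drop j bs)) * gm m (take (Suc j) bs))" for j t
  have P0: "A * star a bs = (\<Sum>j<r. (-1)^j * star a (drop j bs) * gm m (take (Suc j) bs)) + (-1)^r * gm m bs * A"
    unfolding A_def r_def by (rule push[OF assms])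
  have Pj: "A * star a (drop j bs) = (\<Sum>t<r-j. (-1)^t * star a (drop (j+t) bs) * gm m (take (Suc t) (drop j bs)))
      + (-1)^(r-j) * gm m (drop j bs) * A" for j
  proof -
    have "distinct (a # m # drop j bs)" using assms by (auto dest: in_set_dropD simp: distinct_drop)
    from push[OF this] show ?thesis unfolding A_def r_def by (simp add: add.commute)
  qed
  have Tj: "A * ((-1)^j * star a (drop j bs) * gm m (take (Suc j) bs)) =
      (\<Sum>t<r-j. H j t) + (-1)^r * (gm m (drop j bs) * A * gm m (take (Suc j) bs))" if j: "j < r" for j
  proof -
    have "A * ((-1)^j * star a (drop j bs) * gm m (take (Suc j) bs)) =
       (-1)^j * (A * star a (drop j bs)) * gm m (take (Suc j) bs)"
      by (simp add: mult.assoc neg1_comm2)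
    also have "\<dots> = (\<Sum>t<r-j. H j t) + (-1)^(j + (r-j)) * (gm m (drop j bs) * A * gm m (take (Suc j) bs))"
      unfolding Pj H_def
      by (simp add: distrib_left distrib_right sum_distrib_left sum_distrib_right mult.assoc[symmetric] flip: power_add)
    also have "j + (r - j) = r" using j by simp
    finally show ?thesis .
  qed
  have "A * A * star a bs = A * (A * star a bs)" by (simp add: mult.assoc)
  also have "\<dots> = (\<Sum>j<r. A * ((-1)^j * star a (drop j bs) * gm m (take (Suc j) bs))) + (-1)^r * (A * gm m bs * A)"
    unfolding P0 by (simp add: distrib_left sum_distrib_left mult.assoc neg1_comm2)
  also have "\<dots> = (\<Sum>j<r. \<Sum>t<r-j. H j t) + (-1)^r * ((\<Sum>j<r. gm m (drop j bs) * A * gm m (take (Suc j) bs)) + A * gm m bs * A)"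
    using Tj by (simp add: sum.distrib sum_distrib_left distrib_left)
  also have "(\<Sum>j<r. gm m (drop j bs) * A * gm m (take (Suc j) bs)) + A * gm m bs * A = Lw (a#bs)"
    unfolding Lw_cons A_def r_def by simp
  also have "(\<Sum>j<r. \<Sum>t<r-j. H j t) = (\<Sum>l<r. \<Sum>j\<le>l. H j (l - j))" by (rule tri_swap[symmetric])
  also have "\<dots> = (\<Sum>l<r. (-1)^l * star a (drop l bs) * Lw (take (Suc l) bs))"
  proof (intro sum.cong refl)
    fix l assume "l \<in> {..<r}"
    then have l: "l < length bs" by (simp add: r_def)
    show "(\<Sum>j\<le>l. H j (l - j)) = (-1)^l * star a (drop l bs) * Lw (take (Suc l) bs)"
      unfolding Lw_take[OF l] H_def sum_distrib_left
      by (intro sum.cong refl) (simp add: mult.assoc)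
  qed
  finally show ?thesis unfolding A_def r_def by (simp add: add.commute)
qed

lemma main_list:
  "length s = n \<Longrightarrow> 2 \<le> n \<Longrightarrow> distinct s \<Longrightarrow> m \<notin> set s \<Longrightarrow> (-1)^(n+1) * Lw s = Rw s"
proof (induction n arbitrary: s rule: less_induct)
  case (less n)
  obtain a bs where s: "s = a # bs" using less.prems by (cases s) auto
  obtain b0 cs where bs: "bs = b0 # cs" using less.prems s by (cases bs) auto
  define r where "r = length bs"
  have nr: "n = Suc r" using less.prems s r_def by simp
  have dis: "distinct (a # m # bs)" using less.prems s by auto
  define Q where "Q = star a bs"
  have D1': "g a m * g a m * Q = (-1)^r * Lw s +
     (\<Sum>l<r. (-1)^l * star a (drop l bs) * Lw (take (Suc l) bs))"
    using D1[OF dis] unfolding Q_def r_def s by simp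
  have each: "(-1)^l * star a (drop l bs) * Lw (take (Suc l) bs) = star a (drop l bs) * Rw (take (Suc l) bs)
       + (if l = 0 then Q * (g b0 m * g b0 m - E b0) else 0)" if l: "l < r" for l
  proof (cases "l = 0")
    case True
    then show ?thesis unfolding Q_def by (simp add: bs Lw_def Rw_def algebra_simps)
  next
    case False
    have len: "length (take (Suc l) bs) = Suc l" using l r_def by simp
    have "(-1)^(Suc l + 1) * Lw (take (Suc l) bs) = Rw (take (Suc l) bs)"
      using less.prems s l False r_def
      by (intro less.IH[OF _ len]) (auto dest: in_set_takeD)
    then have "(-1)^l * Lw (take (Suc l) bs) = Rw (take (Suc l) bs)" by simp
    then have "star a (drop l bs) * ((-1)^l * Lw (take (Suc l) bs)) = star a (drop l bs) * Rw (take (Suc l) bs)"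
      by simp
    then show ?thesis using False by (simp add: neg1_comm2 mult.assoc)
  qed
  have sumeq: "(\<Sum>l<r. (-1)^l * star a (drop l bs) * Lw (take (Suc l) bs)) =
      (\<Sum>l<r. star a (drop l bs) * Rw (take (Suc l) bs)) + Q * (g b0 m * g b0 m - E b0)"
  proof -
    have "0 < r" using bs r_def by simp
    then show ?thesis using each by (simp add: sum.distrib)
  qed
  have keyQ: "g a m * g a m * Q = Q * (g b0 m * g b0 m) + (E a - E b0) * Q"
  proof -
    have d: "a \<noteq> b0" "a \<noteq> m" "b0 \<noteq> m" using dis bs by auto
    have c: "g b0 m * g b0 m * star a cs = star a cs * (g b0 m * g b0 m)"
    proof -
      have "g b0 m * star a cs = star a cs * g b0 m" using dis bs by (intro comm_star) auto
      then show ?thesis by (metis mult.assoc)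
    qed
    have "g a m * g a m * Q = (g a m * g a m * g a b0) * star a cs" unfolding Q_def bs by (simp add: mult.assoc)
    also have "\<dots> = g a b0 * (g b0 m * g b0 m * star a cs) + (E a - E b0) * Q"
      unfolding key[OF d] Q_def bs by (simp add: algebra_simps)
    also have "\<dots> = Q * (g b0 m * g b0 m) + (E a - E b0) * Q"
      unfolding c Q_def bs by (simp add: mult.assoc)
    finally show ?thesis .
  qed
  have EQ: "E b0 * Q = Q * E b0" unfolding Q_def using dis by (intro E_star) auto
  have R1: "Rw s = E a * Q - (\<Sum>l<r. star a (drop l bs) * Rw (take (Suc l) bs))"
    unfolding s Q_def r_def using D3 dis by simp
  define SL where "SL = (\<Sum>l<r. (-1)^l * star a (drop l bs) * Lw (take (Suc l) bs))"
  define SR where "SR = (\<Sum>l<r. star a (drop l bs) * Rw (take (Suc l) bs))"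
  define B where "B = g b0 m * g b0 m"
  have "(-1)^r * Lw s = g a m * g a m * Q - SL" using D1' unfolding SL_def by (simp add: eq_diff_eq)
  also have "\<dots> = (Q * B + (E a - E b0) * Q) - (SR + Q * (B - E b0))"
    using keyQ sumeq unfolding SL_def SR_def B_def by simp
  also have "\<dots> = E a * Q - SR" using EQ by (simp add: algebra_simps)
  finally show ?case unfolding nr R1 SR_def by simp
qed

end

lemma grp3: "(a::'a::ab_group_add) + - b + - c = 0 \<Longrightarrow> b = a - c"
proof -
  assume h: "a + - b + - c = 0"
  have "b = (a - c) - (a + - b + - c)" by (simp add: algebra_simps)
  then show ?thesis by (simp only: h diff_zero)
qed

lemma sum_1k: "(\<Sum>a=1..k. F a) = (\<Sum>c<k. F (Suc c))"
  by (induction k) auto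

lemma model_galg2:
  fixes \<tau> :: complex and lam :: "'n::finite \<Rightarrow> complex"
    and emb :: "(complex^'n \<Rightarrow> complex) \<Rightarrow> 'a::ring_1"
    and g :: "'n \<Rightarrow> 'n \<Rightarrow> 'a" and m :: 'n
  assumes tau: "Im \<tau> > 0" and M: "A_model \<tau> lam emb g"
  shows "galg2 g (\<lambda>x. emb (\<lambda>_. wp \<tau> (lam x - lam m))) m"
proof -
  define E where "E x = emb (\<lambda>_. wp \<tau> (lam x - lam m))" for x
  note MM = M[unfolded A_model_def]
  note add0 = MM[THEN conjunct2, THEN conjunct1, rule_format]
  note anti = MM[THEN conjunct2, THEN conjunct2, THEN conjunct2, THEN conjunct2, THEN conjunct1, rule_format]
  note sq = MM[THEN conjunct2, THEN conjunct2, THEN conjunct2, THEN conjunct2, THEN conjunct2, THEN conjunct1, rule_format]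
  note comm0 = MM[THEN conjunct2, THEN conjunct2, THEN conjunct2, THEN conjunct2, THEN conjunct2, THEN conjunct2, THEN conjunct1, rule_format]
  note cyc = MM[THEN conjunct2, THEN conjunct2, THEN conjunct2, THEN conjunct2, THEN conjunct2, THEN conjunct2, THEN conjunct2, THEN conjunct1, rule_format]
  note sw = MM[THEN conjunct2, THEN conjunct2, THEN conjunct2, THEN conjunct2, THEN conjunct2, THEN conjunct2, THEN conjunct2, THEN conjunct2, rule_format]
  have add: "\<And>f h. meromorphic f \<Longrightarrow> meromorphic h \<Longrightarrow> emb (\<lambda>x. f x + h x) = emb f + emb h"
    by (rule add0) (rule conjI)
  have G: "galg g"
  proof
    show "\<And>i j. i \<noteq> j \<Longrightarrow> g j i = - g i j" by (rule anti)
    show "g i j * g p q = g p q * g i j" if "i\<noteq>j" "p\<noteq>q" "i\<noteq>p" "i\<noteq>q" "j\<noteq>p" "j\<noteq>q" for i j p q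
      using that by (intro comm0) auto
    show "g y z * g x z = g x y * g y z - g x z * g x y" if "x\<noteq>y" "y\<noteq>z" "x\<noteq>z" for x y z
    proof -
      have "g x y * g y z + g y z * g z x + g z x * g x y = 0" using that by (intro cyc) auto
      moreover have "g z x = - g x z" by (rule anti) (use that in simp)
      ultimately have "g x y * g y z + - (g y z * g x z) + - (g x z * g x y) = 0" by simp
      then show ?thesis by (rule grp3)
    qed
  qed
  have Ecomm: "E x * g u v = g u v * E x" if "u \<noteq> v" for x u v
  proof -
    have "g u v * emb (\<lambda>_. wp \<tau> (lam x - lam m)) = emb (\<lambda>_. wp \<tau> (lam x - lam m)) * g u v"
      using sw[of u v "\<lambda>_. wp \<tau> (lam x - lam m)", OF conjI[OF that mero_const]] by simp
    then show ?thesis unfolding E_def by simp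
  qed
  have key: "g a m * g a m * g a b = g a b * (g b m * g b m) + (E a - E b) * g a b"
    if ab: "a \<noteq> b" "a \<noteq> m" "b \<noteq> m" for a b
  proof -
    define ca where "ca = wp \<tau> (lam a - lam m)"
    define cb where "cb = wp \<tau> (lam b - lam m)"
    define F' where "F' = (\<lambda>x::complex^'n. cb - wp \<tau> (x $ a - x $ m))"
    have mF': "meromorphic F'" unfolding F'_def using mero_wp[OF tau ab(2)] .
    have mFb: "meromorphic (\<lambda>x::complex^'n. cb - wp \<tau> (x $ b - x $ m))" using mero_wp[OF tau ab(3)] .
    have mc: "meromorphic (\<lambda>_::complex^'n. d)" for d by (rule mero_const)
    have s1: "g a m * g a m = emb (\<lambda>x. ca - wp \<tau> (x $ a - x $ m))" unfolding ca_def using sq ab by simp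
    have s2: "g b m * g b m = emb (\<lambda>x. cb - wp \<tau> (x $ b - x $ m))" unfolding cb_def using sq ab by simp
    have swx: "(\<lambda>x. (\<lambda>x::complex^'n. cb - wp \<tau> (x $ b - x $ m)) (swapc a b x)) = F'"
      unfolding F'_def swapc_def using ab by (simp add: fun_eq_iff)
    have s3: "g a b * (g b m * g b m) = emb F' * g a b"
      unfolding s2 using sw[of a b "\<lambda>x::complex^'n. cb - wp \<tau> (x $ b - x $ m)", OF conjI[OF ab(1) mFb]] swx by simp
    have "(\<lambda>x::complex^'n. ca - wp \<tau> (x $ a - x $ m)) = (\<lambda>x. (\<lambda>_. ca - cb) x + F' x)"
      unfolding F'_def by (simp add: fun_eq_iff)
    then have s4: "emb (\<lambda>x::complex^'n. ca - wp \<tau> (x $ a - x $ m)) = emb (\<lambda>_. ca - cb) + emb F'"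
      using add[OF mc mF'] by simp
    have "(\<lambda>_::complex^'n. ca) = (\<lambda>x. (\<lambda>_. ca - cb) x + (\<lambda>_. cb) x)" by simp
    then have s5: "E a = emb (\<lambda>_. ca - cb) + E b" unfolding E_def ca_def[symmetric] cb_def[symmetric]
      using add[OF mc mc] by metis
    show ?thesis unfolding s1 s3 s4 using s5 by (simp add: algebra_simps)
  qed
  show ?thesis unfolding E_def[symmetric]
    using G Ecomm key by (simp add: galg2_def galg2_axioms_def)
qed

theorem lemma3p2:
  fixes \<tau> :: complex and lam :: "'n::finite \<Rightarrow> complex"
    and emb :: "(complex^'n \<Rightarrow> complex) \<Rightarrow> 'a::ring_1"
    and g :: "'n \<Rightarrow> 'n \<Rightarrow> 'a"
    and k :: nat and i :: "nat \<Rightarrow> 'n" and m :: 'n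
  assumes "CARD('n) \<ge> 2" and "Im \<tau> > 0"
    and "\<forall>p q. p \<noteq> q \<longrightarrow> lam p - lam q \<notin> lattice \<tau>"
    and "A_model \<tau> lam emb g"
    and "k \<ge> 2" and "inj_on i {1..k}" and "m \<notin> i ` {1..k}"
  shows "(-1) ^ (k + 1) *
      (\<Sum>a=1..k. prod_list (map (\<lambda>b. g (i b) m) [a..<k+1]) *
                  prod_list (map (\<lambda>b. g (i b) m) [1..<a+1]))
    = (\<Sum>a=1..k. emb (\<lambda>_. wp \<tau> (lam (i a) - lam m)) *
                  prod_list (map (\<lambda>b. g (i a) (i b)) [a+1..<k+1]) *
                  prod_list (map (\<lambda>b. g (i a) (i b)) [1..<a]))"
proof -
  define E where "E x = emb (\<lambda>_. wp \<tau> (lam x - lam m))" for x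
  have I: "galg2 g E m" unfolding E_def by (rule model_galg2[OF assms(2) assms(4)])
  interpret galg2 g E m by (rule I)
  define s where "s = map i [1..<k+1]"
  have len: "length s = k" unfolding s_def by simp
  have st: "set [1..<k+1] = {1..k}" by auto
  have dis: "distinct s" unfolding s_def distinct_map st using assms(6) by simp
  have ms: "m \<notin> set s" unfolding s_def set_map st using assms(7) .
  have main: "(-1)^(k+1) * Lw s = Rw s" using main_list[OF len assms(5) dis ms] .
  have L: "Lw s = (\<Sum>a=1..k. prod_list (map (\<lambda>b. g (i b) m) [a..<k+1]) *
                  prod_list (map (\<lambda>b. g (i b) m) [1..<a+1]))"
    unfolding Lw_def len sum_1k
  proof (intro sum.cong refl)
    fix c assume c: "c \<in> {..<k}"
    have d: "drop c s = map i [Suc c..<k+1]" unfolding s_def by (simp add: drop_map del: upt_Suc)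
    have t: "take (Suc c) s = map i [1..<Suc c + 1]" unfolding s_def using c by (simp add: take_map take_upt del: upt_Suc)
    show "gm m (drop c s) * gm m (take (Suc c) s) =
        prod_list (map (\<lambda>b. g (i b) m) [Suc c..<k+1]) * prod_list (map (\<lambda>b. g (i b) m) [1..<Suc c + 1])"
      unfolding d t gm_def by (simp add: o_def)
  qed
  have R: "Rw s = (\<Sum>a=1..k. emb (\<lambda>_. wp \<tau> (lam (i a) - lam m)) *
                  prod_list (map (\<lambda>b. g (i a) (i b)) [a+1..<k+1]) *
                  prod_list (map (\<lambda>b. g (i a) (i b)) [1..<a]))"
    unfolding Rw_def len sum_1k
  proof (intro sum.cong refl)
    fix c assume c: "c \<in> {..<k}"
    have n: "s ! c = i (Suc c)" unfolding s_def using c by (simp del: upt_Suc)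
    have d: "drop (Suc c) s = map i [Suc c + 1..<k+1]" unfolding s_def by (simp add: drop_map del: upt_Suc)
    have t: "take c s = map i [1..<Suc c]" unfolding s_def using c by (simp add: take_map take_upt del: upt_Suc)
    show "E (s ! c) * star (s ! c) (drop (Suc c) s) * star (s ! c) (take c s) =
        emb (\<lambda>_. wp \<tau> (lam (i (Suc c)) - lam m)) * prod_list (map (\<lambda>b. g (i (Suc c)) (i b)) [Suc c + 1..<k+1]) *
        prod_list (map (\<lambda>b. g (i (Suc c)) (i b)) [1..<Suc c])"
      unfolding n d t star_def E_def by (simp add: o_def)
  qed
  show ?thesis using main unfolding L R .
qed

end
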